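(* Fix a program in the first-order functional language described in the context. Then for every expression $\pi{:}e$ of the program and every slicing criterion $\sigma$, $$\mathcal S(L(M_\pi^\sigma))\neq\emptyset \iff \mathrm{inSlice}(e,\sigma),$$ where $\mathrm{inSlice}(e,\sigma)$ holds iff $L(A^{\mathrm{comp}}_\pi)\cap\sigma\neq\emptyset$. Here $M_\pi^\sigma$ is the Mohri–Nederhof approximation of the demand grammar $G_\pi^\sigma$ and $A^{\mathrm{comp}}_\pi$ is the completing automaton of $\pi$.
   Context: Programs. A program consists of first-order function definitions $(\mathtt{define}\ (f\ z_1\ \dots\ z_n)\ e_f)$ and a main expression $e_{\mathrm{main}}$, which is treated as the body of a parameterless function $\mathrm{main}$. Programs are in administrative normal form and all variable names are distinct. The grammar is $e ::= (\mathtt{if}\ x\ e_1\ e_2) \mid (\mathtt{let}\ x \leftarrow s\ \mathtt{in}\ e) \mid (\mathtt{return}\ x)$, $s ::= k \mid \mathtt{nil} \mid (\mathtt{cons}\ x_1\ x_2) \mid (\mathtt{car}\ x) \mid (\mathtt{cdr}\ x) \mid (\mathtt{null?}\ x) \mid (+\ x_1\ x_2) \mid (f\ x_1 \dots x_n)$. Every expression, every application and every variable occurrence carries a distinct label $\pi$. Demands. Let $\Sigma=\{0,1,\bar0,\bar1,2\}$. A demand is a set of strings over $\Sigma$. For sets we write $\sigma_1\sigma_2=\{\alpha\beta\}$ and $a\sigma=\{a\alpha\mid\alpha\in\sigma\}$. A slicing criterion is a prefix-closed set of strings over $\{0,1\}$ (given by a regular grammar). Demand analysis. Maps from program points to demands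 are combined by pointwise union. For applications, $\mathcal A(s,\sigma)$ is: - for a constant or $\mathtt{nil}$: $\{\pi\mapsto\sigma\}$; - for $(\mathtt{null?}\ \pi_1{:}x)$: $\{\pi_1\mapsto2\sigma,\pi\mapsto\sigma\}$; - for $(+\ \pi_1{:}x\ \pi_2{:}y)$: $\{\pi_1\mapsto2\sigma,\pi_2\mapsto2\sigma,\pi\mapsto\sigma\}$; - for $(\mathtt{car}\ \pi_1{:}x)$: $\{\pi_1\mapsto2\sigma\cup0\sigma,\pi\mapsto\sigma\}$; - for $(\mathtt{cdr}\ \pi_1{:}x)$: $\{\pi_1\mapsto2\sigma\cup1\sigma,\pi\mapsto\sigma\}$; - for $(\mathtt{cons}\ \pi_1{:}x\ \pi_2{:}y)$: $\{\pi_1\mapsto\bar0\sigma,\pi_2\mapsto\bar1\sigma,\pi\mapsto\sigma\}$; - for $(f\ \pi_1{:}y_1\dots\pi_n{:}y_n)$: $\{\pi_i\mapsto L_f^i\sigma,\pi\mapsto\sigma\}$. For expressions, $\mathcal D$ is: - $\mathcal D(\pi{:}(\mathtt{return}\ \pi_1{:}x),\sigma)=\{\pi_1\mapsto\sigma,\pi\mapsto\sigma\}$; - $\mathcal D(\pi{:}(\mathtt{if}\ \pi_1{:}x\ e_1\ e_2),\sigma)=\mathcal D(e_1,\sigma)\cup\mathcal D(e_2,\sigma)\cup\{\pi_1\mapsto2\sigma,\pi\mapsto\sigma\}$; - $\mathcal D(\pi{:}(\mathtt{let}\ x\leftarrow s\ \mathtt{in}\ e),\sigma)=\mathcal A(s,\bigcup_{\pi'}DE(\pi'))\cup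 DE\cup\{\pi\mapsto\sigma\}$, where $DE=\mathcal D(e,\sigma)$ and $\pi'$ ranges over the occurrences of $x$ in $e$. Summaries and concrete demands. $L_f^i\subseteq\Sigma^*$ satisfies $L_f^i\sigma=\bigcup_{\pi'}\mathcal D(e_f,\sigma)(\pi')$ over occurrences $\pi'$ of the $i$-th parameter in $e_f$, for symbolic $\sigma$. The concrete demands are $\sigma_{\mathrm{main}}=$ the slicing criterion, and $\sigma_f=$ the union of the demands on all call sites of $f$. The demand at $\pi$ in the body of $f$ is $D_\pi=\mathcal D(e_f,\sigma_f)(\pi)$. These equations form a context-free grammar over $\Sigma$ (least solution); $G_\pi^\sigma$ is this grammar with start symbol $D_\pi$. Mohri–Nederhof approximation. Consider each strongly connected component $N'$ of mutually recursive nonterminals whose productions are neither all right-linear nor all left-linear with respect to $N'$. For such a component, add a fresh $A'$ for each $A\in N'$. Replace each production $A\to\alpha_0B_1\alpha_1\cdots B_m\alpha_m$ ($A,B_j\in N'$, the $\alpha_j$ free of $N'$-nonterminals, $m\ge0$) by $A\to\alpha_0B_1,\ B_1'\to\alpha_1B_2,\dots,B_m'\to\alpha_mA'$ (for $m=0$: $A\to\alpha_0A'$), and add $A'\to\epsilon$ for each $A\in N'$. $M_\pi^\sigma$ is the resulting regular grammar/automaton from $G_\pi^\sigma$, with language $L(M_\pi^\sigma)$. Simplification $\mathcal S$ (string-wise from the right, extended to sets by union): - $\mathcal S(\epsilon)=\{\epsilon\}$; - $\mathcal S(0w)=0\mathcal S(w)$ and $\mathcal S(1w)=1\mathcal S(w)$;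 - $\mathcal S(\bar0w)=\{\alpha\mid0\alpha\in\mathcal S(w)\}$ and $\mathcal S(\bar1w)=\{\alpha\mid1\alpha\in\mathcal S(w)\}$; - $\mathcal S(2w)=\emptyset$ if $\mathcal S(w)=\emptyset$, and $\{\epsilon\}$ otherwise. Canonicalization $\mathcal C$ (string-wise from the right, extended by union): - $\mathcal C(\epsilon)=\{\epsilon\}$; - $\mathcal C(0w)=0\mathcal C(w)$, $\mathcal C(1w)=1\mathcal C(w)$, $\mathcal C(2w)=2\mathcal C(w)$; - $\mathcal C(\bar0w)=\{\bar0\mid\mathcal C(w)=\{\epsilon\}\}\cup\{\alpha\mid0\alpha\in\mathcal C(w)\}\cup\{\bar0\bar1\alpha\mid\bar1\alpha\in\mathcal C(w)\}\cup\{\bar0\bar0\alpha\mid\bar0\alpha\in\mathcal C(w)\}$; - $\mathcal C(\bar1w)=\{\bar1\mid\mathcal C(w)=\{\epsilon\}\}\cup\{\alpha\mid1\alpha\in\mathcal C(w)\}\cup\{\bar1\bar1\alpha\mid\bar1\alpha\in\mathcal C(w)\}\cup\{\bar1\bar0\alpha\mid\bar0\alpha\in\mathcal C(w)\}$. $A_\pi$ is an automaton accepting $\mathcal C(L(M_\pi^{\{\epsilon\}}))$. For $p\in\{\bar0,\bar1\}^*$, $\overline{p}$ is the reverse of $p$ with $\bar0\mapsto0$ and $\bar1\mapsto1$. The completing automaton $A^{\mathrm{comp}}_\pi$ is constructed from $A_\pi$ as follows: - take as final states those reachable from the start state by transitions labelled $0,1,2$ only; - reverse every $\bar0$-transition into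 a $0$-transition and every $\bar1$-transition into a $1$-transition, dropping all other transitions; - add a new start state with $\epsilon$-transitions to the old final states. Its language is $L(A^{\mathrm{comp}}_\pi)=\{\overline{p}\mid p\in\{\bar0,\bar1\}^*,\ \exists u\in\{0,1,2\}^*:\ up\in L(A_\pi)\}$. *)

theory Defs
  imports Main
begin

section \<open>Programs (first-order, ANF, labelled)\<close>

type_synonym lab = nat
type_synonym var = nat
type_synonym fname = nat

datatype occ = Occ lab var

datatype app =
    AConst lab int
  | ANil lab
  | ACons lab occ occ
  | ACar lab occ
  | ACdr lab occ
  | ANull lab occ
  | APlus lab occ occ
  | ACall lab fname "occ list"

datatype expr =
    EIf lab occ expr expr
  | ELet lab var app expr
  | EReturn lab occ

text \<open>A function definition (define (f z_1 ... z_n) e_f)\<close>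
type_synonym fdef = "fname \<times> var list \<times> expr"
text \<open>A program: function definitions and the main expression\<close>
type_synonym prog = "fdef list \<times> expr"

fun occ_lab :: "occ \<Rightarrow> lab" where "occ_lab (Occ l x) = l"
fun occ_var :: "occ \<Rightarrow> var" where "occ_var (Occ l x) = x"

fun app_occs :: "app \<Rightarrow> occ list" where
  "app_occs (AConst l k) = []"
| "app_occs (ANil l) = []"
| "app_occs (ACons l a b) = [a, b]"
| "app_occs (ACar l a) = [a]"
| "app_occs (ACdr l a) = [a]"
| "app_occs (ANull l a) = [a]"
| "app_occs (APlus l a b) = [a, b]"
| "app_occs (ACall l f as) = as"

fun app_lab :: "app \<Rightarrow> lab" where
  "app_lab (AConst l k) = l"
| "app_lab (ANil l) = l"
| "app_lab (ACons l a b) = l"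
| "app_lab (ACar l a) = l"
| "app_lab (ACdr l a) = l"
| "app_lab (ANull l a) = l"
| "app_lab (APlus l a b) = l"
| "app_lab (ACall l f as) = l"

fun expr_lab :: "expr \<Rightarrow> lab" where
  "expr_lab (EIf l x e1 e2) = l"
| "expr_lab (ELet l x s e) = l"
| "expr_lab (EReturn l x) = l"

fun expr_occs :: "expr \<Rightarrow> occ list" where
  "expr_occs (EIf l x e1 e2) = x # expr_occs e1 @ expr_occs e2"
| "expr_occs (ELet l x s e) = app_occs s @ expr_occs e"
| "expr_occs (EReturn l x) = [x]"

definition occ_labs :: "var \<Rightarrow> expr \<Rightarrow> lab set" where
  "occ_labs x e = {occ_lab oc | oc. oc \<in> set (expr_occs e) \<and> occ_var oc = x}"

fun all_labs :: "expr \<Rightarrow> lab list" where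
  "all_labs (EIf l x e1 e2) = l # occ_lab x # all_labs e1 @ all_labs e2"
| "all_labs (ELet l x s e) = l # app_lab s # map occ_lab (app_occs s) @ all_labs e"
| "all_labs (EReturn l x) = [l, occ_lab x]"

fun expr_labs :: "expr \<Rightarrow> lab list" where
  "expr_labs (EIf l x e1 e2) = l # expr_labs e1 @ expr_labs e2"
| "expr_labs (ELet l x s e) = l # expr_labs e"
| "expr_labs (EReturn l x) = [l]"

fun binders :: "expr \<Rightarrow> var list" where
  "binders (EIf l x e1 e2) = binders e1 @ binders e2"
| "binders (ELet l x s e) = x # binders e"
| "binders (EReturn l x) = []"

text \<open>Call sites: (label of the application, called function, number of arguments)\<close>
fun calls :: "expr \<Rightarrow> (lab \<times> fname \<times> nat) list" where
  "calls (EIf l x e1 e2) = calls e1 @ calls e2"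
| "calls (ELet l x s e) =
     (case s of ACall l' f as \<Rightarrow> [(l', f, length as)] | _ \<Rightarrow> []) @ calls e"
| "calls (EReturn l x) = []"

fun scoped :: "var set \<Rightarrow> expr \<Rightarrow> bool" where
  "scoped V (EIf l x e1 e2) = (occ_var x \<in> V \<and> scoped V e1 \<and> scoped V e2)"
| "scoped V (ELet l x s e) = ((\<forall>oc\<in>set (app_occs s). occ_var oc \<in> V) \<and> scoped (insert x V) e)"
| "scoped V (EReturn l x) = (occ_var x \<in> V)"

definition bodies :: "prog \<Rightarrow> expr list" where
  "bodies P = map (\<lambda>(f, zs, e). e) (fst P) @ [snd P]"

definition wf_prog :: "prog \<Rightarrow> bool" where
  "wf_prog P \<longleftrightarrow>
     distinct (concat (map all_labs (bodies P))) \<and>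
     distinct (concat (map (\<lambda>(f, zs, e). zs @ binders e) (fst P)) @ binders (snd P)) \<and>
     distinct (map fst (fst P)) \<and>
     (\<forall>e \<in> set (bodies P). \<forall>(l, g, n) \<in> set (calls e).
        \<exists>zs e'. (g, zs, e') \<in> set (fst P) \<and> length zs = n) \<and>
     (\<forall>(f, zs, e) \<in> set (fst P). scoped (set zs) e) \<and>
     scoped {} (snd P)"

definition prog_expr_labs :: "prog \<Rightarrow> lab set" where
  "prog_expr_labs P = (\<Union>e \<in> set (bodies P). set (expr_labs e))"

definition callsites :: "prog \<Rightarrow> fname \<Rightarrow> lab set" where
  "callsites P f = {l. \<exists>e \<in> set (bodies P). \<exists>n. (l, f, n) \<in> set (calls e)}"

text \<open>A grammar is a (possibly infinite) set of productions A -> rhs; rhs is a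
  list of terminals (Inl) and nonterminals (Inr).\<close>
type_synonym ('t, 'n) grammar = "('n \<times> ('t + 'n) list) set"

definition step :: "('t, 'n) grammar \<Rightarrow> (('t + 'n) list \<times> ('t + 'n) list) set" where
  "step G = {(u @ [Inr A] @ v, u @ rhs @ v) | u A v rhs. (A, rhs) \<in> G}"

definition lang :: "('t, 'n) grammar \<Rightarrow> 'n \<Rightarrow> 't list set" where
  "lang G S = {w. ([Inr S], map Inl w) \<in> (step G)\<^sup>*}"

datatype sym = S0 | S1 | S0b | S1b | S2

text \<open>Nonterminals of the demand grammar: D_pi, L_f^i (0-based i), sigma_f, and
  sigma_main (the slicing criterion)\<close>
datatype nt = Dn lab | Ln fname nat | Sig fname | Crit

type_synonym form = "(sym + nt) list"

definition munion :: "(lab \<Rightarrow> form set) \<Rightarrow> (lab \<Rightarrow> form set) \<Rightarrow> lab \<Rightarrow> form set" (infixl "\<uplus>" 65) where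
  "munion D1 D2 = (\<lambda>p. D1 p \<union> D2 p)"

definition single :: "lab \<Rightarrow> form set \<Rightarrow> lab \<Rightarrow> form set" where
  "single l S = (\<lambda>_. {})(l := S)"

definition pre :: "sym \<Rightarrow> form set \<Rightarrow> form set" where
  "pre a S = (\<lambda>\<alpha>. Inl a # \<alpha>) ` S"

definition preN :: "nt \<Rightarrow> form set \<Rightarrow> form set" where
  "preN N S = (\<lambda>\<alpha>. Inr N # \<alpha>) ` S"

text \<open>The function A(s, sigma), computed symbolically (demands as sets of
  sentential forms, so that L_f^i can occur as a nonterminal).\<close>
fun Adem :: "app \<Rightarrow> form set \<Rightarrow> lab \<Rightarrow> form set" where
  "Adem (AConst l k) \<sigma> = single l \<sigma>"
| "Adem (ANil l) \<sigma> = single l \<sigma>"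
| "Adem (ANull l x) \<sigma> = single (occ_lab x) (pre S2 \<sigma>) \<uplus> single l \<sigma>"
| "Adem (APlus l x y) \<sigma> =
     single (occ_lab x) (pre S2 \<sigma>) \<uplus> single (occ_lab y) (pre S2 \<sigma>) \<uplus> single l \<sigma>"
| "Adem (ACar l x) \<sigma> = single (occ_lab x) (pre S2 \<sigma> \<union> pre S0 \<sigma>) \<uplus> single l \<sigma>"
| "Adem (ACdr l x) \<sigma> = single (occ_lab x) (pre S2 \<sigma> \<union> pre S1 \<sigma>) \<uplus> single l \<sigma>"
| "Adem (ACons l x y) \<sigma> =
     single (occ_lab x) (pre S0b \<sigma>) \<uplus> single (occ_lab y) (pre S1b \<sigma>) \<uplus> single l \<sigma>"
| "Adem (ACall l f ys) \<sigma> =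
     (\<lambda>p. \<Union>{preN (Ln f i) \<sigma> | i. i < length ys \<and> occ_lab (ys ! i) = p}) \<uplus> single l \<sigma>"

fun Ddem :: "expr \<Rightarrow> form set \<Rightarrow> lab \<Rightarrow> form set" where
  "Ddem (EReturn l x) \<sigma> = single (occ_lab x) \<sigma> \<uplus> single l \<sigma>"
| "Ddem (EIf l x e1 e2) \<sigma> =
     Ddem e1 \<sigma> \<uplus> Ddem e2 \<sigma> \<uplus> single (occ_lab x) (pre S2 \<sigma>) \<uplus> single l \<sigma>"
| "Ddem (ELet l x s e) \<sigma> =
     (let DE = Ddem e \<sigma> in Adem s (\<Union>p \<in> occ_labs x e. DE p) \<uplus> DE \<uplus> single l \<sigma>)"

text \<open>Since every rule only prefixes sigma, D(e_f, sigma_f)(pi) = D(e_f, {eps})(pi) sigma_f;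
  sigma_f and sigma_main are nonterminals, and L_f^i is the symbolic summary.\<close>
definition demand_grammar :: "prog \<Rightarrow> sym list set \<Rightarrow> (sym, nt) grammar" where
  "demand_grammar P \<sigma> =
     {(Crit, map Inl w) | w. w \<in> \<sigma>}
   \<union> {(Dn p, \<alpha> @ [Inr (Sig f)]) | f zs e p \<alpha>.
        (f, zs, e) \<in> set (fst P) \<and> \<alpha> \<in> Ddem e {[]} p}
   \<union> {(Dn p, \<alpha> @ [Inr Crit]) | p \<alpha>. \<alpha> \<in> Ddem (snd P) {[]} p}
   \<union> {(Sig f, [Inr (Dn p)]) | f p. p \<in> callsites P f}
   \<union> {(Ln f i, \<alpha>) | f zs e i \<alpha>.
        (f, zs, e) \<in> set (fst P) \<and> i < length zs \<and>
        \<alpha> \<in> (\<Union>p \<in> occ_labs (zs ! i) e. Ddem e {[]} p)}"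

section \<open>Mohri-Nederhof approximation\<close>

datatype 'n mnnt = Orig 'n | Prime 'n

definition nt_edge :: "('t, 'n) grammar \<Rightarrow> ('n \<times> 'n) set" where
  "nt_edge G = {(A, B). \<exists>rhs. (A, rhs) \<in> G \<and> Inr B \<in> set rhs}"

definition scc :: "('t, 'n) grammar \<Rightarrow> 'n \<Rightarrow> 'n set" where
  "scc G A = {B. (A, B) \<in> (nt_edge G)\<^sup>* \<and> (B, A) \<in> (nt_edge G)\<^sup>*}"

definition right_linear_wrt :: "'n set \<Rightarrow> ('t + 'n) list \<Rightarrow> bool" where
  "right_linear_wrt N rhs \<longleftrightarrow>
     (\<forall>i < length rhs. (\<exists>B \<in> N. rhs ! i = Inr B) \<longrightarrow> i = length rhs - 1)"

definition left_linear_wrt :: "'n set \<Rightarrow> ('t + 'n) list \<Rightarrow> bool" where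
  "left_linear_wrt N rhs \<longleftrightarrow>
     (\<forall>i < length rhs. (\<exists>B \<in> N. rhs ! i = Inr B) \<longrightarrow> i = 0)"

definition needs_mn :: "('t, 'n) grammar \<Rightarrow> 'n set \<Rightarrow> bool" where
  "needs_mn G N \<longleftrightarrow>
     \<not> (\<forall>(A, rhs) \<in> G. A \<in> N \<longrightarrow> right_linear_wrt N rhs) \<and>
     \<not> (\<forall>(A, rhs) \<in> G. A \<in> N \<longrightarrow> left_linear_wrt N rhs)"

text \<open>Splitting A -> a0 B1 a1 ... Bm am into A -> a0 B1, B1' -> a1 B2, ..., Bm' -> am A'
  (and A -> a0 A' if m = 0). Arguments: N-membership, current left-hand side,
  the original left-hand side A, remaining rhs, accumulated segment.\<close>
fun mn_chain :: "('n \<Rightarrow> bool) \<Rightarrow> 'n mnnt \<Rightarrow> 'n \<Rightarrow> ('t + 'n) list \<Rightarrow> ('t + 'n mnnt) list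
                 \<Rightarrow> ('n mnnt \<times> ('t + 'n mnnt) list) list" where
  "mn_chain inN cur A [] acc = [(cur, acc @ [Inr (Prime A)])]"
| "mn_chain inN cur A (Inl t # r) acc = mn_chain inN cur A r (acc @ [Inl t])"
| "mn_chain inN cur A (Inr B # r) acc =
     (if inN B then (cur, acc @ [Inr (Orig B)]) # mn_chain inN (Prime B) A r []
      else mn_chain inN cur A r (acc @ [Inr (Orig B)]))"

definition mohri_nederhof :: "('t, 'n) grammar \<Rightarrow> ('t, 'n mnnt) grammar" where
  "mohri_nederhof G =
     {p | A rhs p. (A, rhs) \<in> G \<and> needs_mn G (scc G A) \<and>
        p \<in> set (mn_chain (\<lambda>B. B \<in> scc G A) (Orig A) A rhs [])}
   \<union> {(Orig A, map (map_sum id Orig) rhs) | A rhs. (A, rhs) \<in> G \<and> \<not> needs_mn G (scc G A)}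
   \<union> {(Prime A, []) | A. needs_mn G (scc G A)}"

definition LM :: "prog \<Rightarrow> sym list set \<Rightarrow> lab \<Rightarrow> sym list set" where
  "LM P \<sigma> p = lang (mohri_nederhof (demand_grammar P \<sigma>)) (Orig (Dn p))"

fun simp1 :: "sym list \<Rightarrow> sym list set" where
  "simp1 [] = {[]}"
| "simp1 (S0 # w) = (Cons S0) ` simp1 w"
| "simp1 (S1 # w) = (Cons S1) ` simp1 w"
| "simp1 (S0b # w) = {\<alpha>. S0 # \<alpha> \<in> simp1 w}"
| "simp1 (S1b # w) = {\<alpha>. S1 # \<alpha> \<in> simp1 w}"
| "simp1 (S2 # w) = (if simp1 w = {} then {} else {[]})"

definition simpS :: "sym list set \<Rightarrow> sym list set" where
  "simpS L = (\<Union>w \<in> L. simp1 w)"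

fun canon1 :: "sym list \<Rightarrow> sym list set" where
  "canon1 [] = {[]}"
| "canon1 (S0 # w) = (Cons S0) ` canon1 w"
| "canon1 (S1 # w) = (Cons S1) ` canon1 w"
| "canon1 (S2 # w) = (Cons S2) ` canon1 w"
| "canon1 (S0b # w) =
     (if canon1 w = {[]} then {[S0b]} else {}) \<union> {\<alpha>. S0 # \<alpha> \<in> canon1 w}
     \<union> {S0b # S1b # \<alpha> | \<alpha>. S1b # \<alpha> \<in> canon1 w}
     \<union> {S0b # S0b # \<alpha> | \<alpha>. S0b # \<alpha> \<in> canon1 w}"
| "canon1 (S1b # w) =
     (if canon1 w = {[]} then {[S1b]} else {}) \<union> {\<alpha>. S1 # \<alpha> \<in> canon1 w}
     \<union> {S1b # S1b # \<alpha> | \<alpha>. S1b # \<alpha> \<in> canon1 w}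
     \<union> {S1b # S0b # \<alpha> | \<alpha>. S0b # \<alpha> \<in> canon1 w}"

definition canonS :: "sym list set \<Rightarrow> sym list set" where
  "canonS L = (\<Union>w \<in> L. canon1 w)"

definition LA :: "prog \<Rightarrow> lab \<Rightarrow> sym list set" where
  "LA P p = canonS (LM P {[]} p)"

fun unbar :: "sym \<Rightarrow> sym" where
  "unbar S0b = S0"
| "unbar S1b = S1"
| "unbar a = a"

definition ovl :: "sym list \<Rightarrow> sym list" where
  "ovl p = rev (map unbar p)"

definition Lcomp :: "prog \<Rightarrow> lab \<Rightarrow> sym list set" where
  "Lcomp P p = {ovl q | q u. set q \<subseteq> {S0b, S1b} \<and> set u \<subseteq> {S0, S1, S2} \<and> u @ q \<in> LA P p}"

definition inSlice :: "prog \<Rightarrow> lab \<Rightarrow> sym list set \<Rightarrow> bool" where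
  "inSlice P p \<sigma> \<longleftrightarrow> Lcomp P p \<inter> \<sigma> \<noteq> {}"

definition regular_lang :: "sym list set \<Rightarrow> bool" where
  "regular_lang L \<longleftrightarrow>
     (\<exists>(G :: (sym, nat) grammar) S. finite G \<and>
        (\<forall>(A, rhs) \<in> G. \<exists>u. rhs = map Inl u \<or> (\<exists>B. rhs = map Inl u @ [Inr B])) \<and>
        L = lang G S)"

definition slicing_criterion :: "sym list set \<Rightarrow> bool" where
  "slicing_criterion \<sigma> \<longleftrightarrow>
     (\<forall>w \<in> \<sigma>. set w \<subseteq> {S0, S1}) \<and>
     (\<forall>w v. w @ v \<in> \<sigma> \<longrightarrow> w \<in> \<sigma>) \<and>
     regular_lang \<sigma>"

end

theory Submission
  imports Defs
begin
lemma simp1_01: "set s \<subseteq> {S0,S1} \<Longrightarrow> simp1 s = {s}"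
proof (induction s)
  case (Cons a s) then show ?case by (cases a) auto
qed simp
lemma ovl_Cons: "ovl (a # q) = ovl q @ [unbar a]"
  by (simp add: ovl_def)
lemma simp1_bars: "set q \<subseteq> {S0b,S1b} \<Longrightarrow> set s \<subseteq> {S0,S1} \<Longrightarrow> simp1 (q @ s) = {s'. s = ovl q @ s'}"
proof (induction q)
  case Nil then show ?case by (simp add: simp1_01 ovl_def)
next
  case (Cons a q)
  then have IH: "simp1 (q @ s) = {s'. s = ovl q @ s'}" by auto
  from Cons.prems have "a = S0b \<or> a = S1b" by auto
  then show ?case using IH by (elim disjE) (simp_all add: ovl_Cons)
qed
lemma ovl_01: "set q \<subseteq> {S0b,S1b} \<Longrightarrow> set (ovl q) \<subseteq> {S0,S1}"
  by (induction q) (auto simp: ovl_def)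

lemma simp1_u: "set u \<subseteq> {S0,S1,S2} \<Longrightarrow> (simp1 (u @ w) \<noteq> {}) = (simp1 w \<noteq> {})"
proof (induction u)
  case (Cons a u)
  then have "a = S0 \<or> a = S1 \<or> a = S2" "(simp1 (u @ w) \<noteq> {}) = (simp1 w \<noteq> {})" by auto
  then show ?case by (elim disjE) simp_all
qed simp
lemma canon1_sub: "c1 \<in> canon1 y \<Longrightarrow> c2 \<in> canon1 y \<Longrightarrow> c1 = c2"
proof (induction y arbitrary: c1 c2)
  case Nil then show ?case by simp
next
  case (Cons a y)
  have ss: "canon1 y = {} \<or> (\<exists>c. canon1 y = {c})" using Cons.IH by blast
  show ?case
  proof (cases a)
    case S0b
    show ?thesis
    proof (cases "canon1 y = {}")
      case True with Cons.prems S0b show ?thesis by simp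
    next
      case False
      then obtain c where c: "canon1 y = {c}" using ss by blast
      show ?thesis using Cons.prems S0b c
        by (cases c rule: list.exhaust[case_product sym.exhaust]) (auto split: if_splits)
    qed
  next
    case S1b
    show ?thesis
    proof (cases "canon1 y = {}")
      case True with Cons.prems S1b show ?thesis by simp
    next
      case False
      then obtain c where c: "canon1 y = {c}" using ss by blast
      show ?thesis using Cons.prems S1b c
        by (cases c rule: list.exhaust[case_product sym.exhaust]) (auto split: if_splits)
    qed
  qed (use Cons in auto)
qed

lemma canon1_shape: "c \<in> canon1 y \<Longrightarrow> \<exists>u q. c = u @ q \<and> set u \<subseteq> {S0,S1,S2} \<and> set q \<subseteq> {S0b,S1b}"
proof (induction y arbitrary: c)
  case Nil then show ?case by simp
next
  case (Cons a y)
  show ?case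
  proof (cases a)
    case S0
    with Cons.prems obtain x where x: "x \<in> canon1 y" "c = S0 # x" by auto
    then obtain u q where "x = u @ q \<and> set u \<subseteq> {S0,S1,S2} \<and> set q \<subseteq> {S0b,S1b}" using Cons.IH by blast
    with x show ?thesis by (intro exI[of _ "S0 # u"] exI[of _ q]) auto
  next
    case S1
    with Cons.prems obtain x where x: "x \<in> canon1 y" "c = S1 # x" by auto
    then obtain u q where "x = u @ q \<and> set u \<subseteq> {S0,S1,S2} \<and> set q \<subseteq> {S0b,S1b}" using Cons.IH by blast
    with x show ?thesis by (intro exI[of _ "S1 # u"] exI[of _ q]) auto
  next
    case S2
    with Cons.prems obtain x where x: "x \<in> canon1 y" "c = S2 # x" by auto
    then obtain u q where "x = u @ q \<and> set u \<subseteq> {S0,S1,S2} \<and> set q \<subseteq> {S0b,S1b}" using Cons.IH by blast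
    with x show ?thesis by (intro exI[of _ "S2 # u"] exI[of _ q]) auto
  next
    case S0b
    from Cons.prems S0b have "c = [S0b] \<or> (S0 # c \<in> canon1 y) \<or> (\<exists>\<alpha>. c = S0b#S1b#\<alpha> \<and> S1b#\<alpha> \<in> canon1 y) \<or> (\<exists>\<alpha>. c = S0b # S0b # \<alpha> \<and> S0b # \<alpha> \<in> canon1 y)"
      by (auto split: if_splits)
    then show ?thesis
    proof (elim disjE exE conjE)
      assume "c = [S0b]" then show ?thesis by (intro exI[of _ "[]"] exI[of _ "[S0b]"]) auto
    next
      assume "S0 # c \<in> canon1 y"
      then obtain u q where "S0 # c = u @ q" "set u \<subseteq> {S0,S1,S2}" "set q \<subseteq> {S0b,S1b}" using Cons.IH by blast
      then show ?thesis by (cases u) auto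
    next
      fix \<alpha> assume h: "c = S0b#S1b#\<alpha>" "S1b#\<alpha> \<in> canon1 y"
      then obtain u q where "S1b # \<alpha> = u @ q" "set u \<subseteq> {S0,S1,S2}" "set q \<subseteq> {S0b,S1b}" using Cons.IH by blast
      with h show ?thesis by (intro exI[of _ "[]"] exI[of _ c]) (cases u; auto)
    next
      fix \<alpha> assume h: "c = S0b#S0b#\<alpha>" "S0b#\<alpha> \<in> canon1 y"
      then obtain u q where "S0b # \<alpha> = u @ q" "set u \<subseteq> {S0,S1,S2}" "set q \<subseteq> {S0b,S1b}" using Cons.IH by blast
      with h show ?thesis by (intro exI[of _ "[]"] exI[of _ c]) (cases u; auto)
    qed
  next
    case S1b
    from Cons.prems S1b have "c = [S1b] \<or> (S1 # c \<in> canon1 y) \<or> (\<exists>\<alpha>. c = S1b#S1b#\<alpha> \<and> S1b#\<alpha> \<in> canon1 y) \<or> (\<exists>\<alpha>. c = S1b # S0b # \<alpha> \<and> S0b # \<alpha> \<in> canon1 y)"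
      by (auto split: if_splits)
    then show ?thesis
    proof (elim disjE exE conjE)
      assume "c = [S1b]" then show ?thesis by (intro exI[of _ "[]"] exI[of _ "[S1b]"]) auto
    next
      assume "S1 # c \<in> canon1 y"
      then obtain u q where "S1 # c = u @ q" "set u \<subseteq> {S0,S1,S2}" "set q \<subseteq> {S0b,S1b}" using Cons.IH by blast
      then show ?thesis by (cases u) auto
    next
      fix \<alpha> assume h: "c = S1b#S1b#\<alpha>" "S1b#\<alpha> \<in> canon1 y"
      then obtain u q where "S1b # \<alpha> = u @ q" "set u \<subseteq> {S0,S1,S2}" "set q \<subseteq> {S0b,S1b}" using Cons.IH by blast
      with h show ?thesis by (intro exI[of _ "[]"] exI[of _ c]) (cases u; auto)
    next
      fix \<alpha> assume h: "c = S1b#S0b#\<alpha>" "S0b#\<alpha> \<in> canon1 y"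
      then obtain u q where "S0b # \<alpha> = u @ q" "set u \<subseteq> {S0,S1,S2}" "set q \<subseteq> {S0b,S1b}" using Cons.IH by blast
      with h show ?thesis by (intro exI[of _ "[]"] exI[of _ c]) (cases u; auto)
    qed
  qed
qed

lemma simp1_canon: "simp1 (y @ s) = (\<Union>c\<in>canon1 y. simp1 (c @ s))"
proof (induction y)
  case Nil then show ?case by simp
next
  case (Cons a y)
  have ss: "canon1 y = {} \<or> (\<exists>c. canon1 y = {c})" using canon1_sub by blast
  show ?case
  proof (cases "canon1 y = {}")
    case True
    then have "simp1 (y @ s) = {}" using Cons.IH by simp
    moreover have "canon1 (a # y) = {}" using True by (cases a) auto
    ultimately show ?thesis by (cases a) auto
  next
    case False
    then obtain c where c: "canon1 y = {c}" using ss by blast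
    then have IH: "simp1 (y @ s) = simp1 (c @ s)" using Cons.IH by simp
    show ?thesis
    proof (cases a)
      case S0 then show ?thesis using IH c by simp
    next
      case S1 then show ?thesis using IH c by simp
    next
      case S2 then show ?thesis using IH c by simp
    next
      case S0b
      show ?thesis
      proof (cases c)
        case Nil then show ?thesis using IH c S0b by simp
      next
        case (Cons b c') then show ?thesis using IH c S0b by (cases b) auto
      qed
    next
      case S1b
      show ?thesis
      proof (cases c)
        case Nil then show ?thesis using IH c S1b by simp
      next
        case (Cons b c') then show ?thesis using IH c S1b by (cases b) auto
      qed
    qed
  qed
qed

fun isDnt :: "nt \<Rightarrow> bool" where
  "isDnt (Ln f i) = False"
| "isDnt _ = True"

fun isD :: "nt mnnt \<Rightarrow> bool" where
  "isD (Orig A) = isDnt A"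
| "isD (Prime A) = False"

definition lnform :: "form \<Rightarrow> bool" where
  "lnform \<alpha> \<longleftrightarrow> (\<forall>B. Inr B \<in> set \<alpha> \<longrightarrow> \<not> isDnt B)"

definition noD :: "(sym + nt mnnt) list \<Rightarrow> bool" where
  "noD \<gamma> \<longleftrightarrow> (\<forall>Y. Inr Y \<in> set \<gamma> \<longrightarrow> \<not> isD Y)"

lemma lnform_simps[simp]: "lnform [] = True" "lnform (x # \<alpha>) = ((\<forall>B. x = Inr B \<longrightarrow> \<not> isDnt B) \<and> lnform \<alpha>)"
  "lnform (\<alpha> @ \<beta>) = (lnform \<alpha> \<and> lnform \<beta>)"
  by (auto simp: lnform_def)

lemma Adem_lnform: "(\<forall>\<alpha>\<in>S. lnform \<alpha>) \<Longrightarrow> \<alpha> \<in> Adem s S p \<Longrightarrow> lnform \<alpha>"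
  by (cases s) (auto simp: munion_def single_def pre_def preN_def split: if_splits)

lemma Ddem_lnform: "(\<forall>\<alpha>\<in>S. lnform \<alpha>) \<Longrightarrow> \<alpha> \<in> Ddem e S p \<Longrightarrow> lnform \<alpha>"
proof (induction e arbitrary: p \<alpha>)
  case (EIf l x e1 e2) then show ?case
    by (auto simp: munion_def single_def pre_def split: if_splits)
next
  case (ELet l x s e)
  have "\<forall>\<alpha>\<in>(\<Union>p \<in> occ_labs x e. Ddem e S p). lnform \<alpha>" using ELet by blast
  then show ?case using ELet Adem_lnform[of "\<Union>p \<in> occ_labs x e. Ddem e S p" \<alpha> s p]
    by (auto simp: munion_def single_def Let_def split: if_splits)
next
  case (EReturn l x) then show ?case
    by (auto simp: munion_def single_def split: if_splits)
qed

lemma Ddem_lnform0: "\<alpha> \<in> Ddem e {[]} p \<Longrightarrow> lnform \<alpha>"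
  using Ddem_lnform[of "{[]}"] by auto

definition gshape :: "nt \<Rightarrow> form \<Rightarrow> bool" where
  "gshape A rhs \<longleftrightarrow>
     (if A = Crit then (\<exists>w. rhs = map Inl w)
      else if isDnt A then (\<exists>\<beta> X. rhs = \<beta> @ [Inr X] \<and> isDnt X \<and> lnform \<beta>)
      else lnform rhs)"

lemma G_shape: "(A, rhs) \<in> demand_grammar P \<sigma> \<Longrightarrow> gshape A rhs"
  unfolding demand_grammar_def gshape_def
  by (auto dest: Ddem_lnform0)

lemma G_crit: "(Crit, rhs) \<in> demand_grammar P \<sigma> \<longleftrightarrow> (\<exists>w\<in>\<sigma>. rhs = map Inl w)"
  unfolding demand_grammar_def by (simp add: Bex_def conj_commute)

lemma G_same: "A \<noteq> Crit \<Longrightarrow> (A, rhs) \<in> demand_grammar P \<sigma>1 \<longleftrightarrow> (A, rhs) \<in> demand_grammar P \<sigma>2"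
  unfolding demand_grammar_def by simp

lemma edge_same: "nt_edge (demand_grammar P \<sigma>1) = nt_edge (demand_grammar P \<sigma>2)"
proof -
  have *: "(A, B) \<in> nt_edge (demand_grammar P \<sigma>1)" if "(A, B) \<in> nt_edge (demand_grammar P \<sigma>2)" for A B \<sigma>1 \<sigma>2
  proof -
    from that obtain rhs where r: "(A, rhs) \<in> demand_grammar P \<sigma>2" "Inr B \<in> set rhs"
      unfolding nt_edge_def by auto
    have "A \<noteq> Crit"
    proof
      assume "A = Crit"
      then obtain w where "rhs = map Inl w" using r(1) G_crit by blast
      then show False using r(2) by auto
    qed
    then have "(A, rhs) \<in> demand_grammar P \<sigma>1" using G_same r(1) by metis
    then show ?thesis using r(2) unfolding nt_edge_def by auto
  qed
  show ?thesis
    by (intro subset_antisym subrelI; erule *)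
qed

lemma scc_same: "scc (demand_grammar P \<sigma>1) = scc (demand_grammar P \<sigma>2)"
  by (rule ext) (simp only: scc_def edge_same[of P \<sigma>1 \<sigma>2])

lemma rl_map_Inl: "right_linear_wrt N (map Inl w)" "left_linear_wrt N (map Inl w)"
  unfolding right_linear_wrt_def left_linear_wrt_def by auto

lemma needs_same: "needs_mn (demand_grammar P \<sigma>1) N = needs_mn (demand_grammar P \<sigma>2) N"
proof -
  have *: "(\<forall>(A, rhs) \<in> demand_grammar P \<sigma>1. A \<in> N \<longrightarrow> R rhs) = (\<forall>(A, rhs) \<in> demand_grammar P \<sigma>2. A \<in> N \<longrightarrow> R rhs)"
    if R: "\<And>w. R (map Inl w)" for R
  proof -
    have "(\<forall>(A, rhs) \<in> demand_grammar P \<sigma>. A \<in> N \<longrightarrow> R rhs) = (\<forall>A rhs. A \<noteq> Crit \<longrightarrow> (A, rhs) \<in> demand_grammar P \<sigma> \<longrightarrow> A \<in> N \<longrightarrow> R rhs)" for \<sigma>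
    proof
      assume H: "\<forall>A rhs. A \<noteq> Crit \<longrightarrow> (A, rhs) \<in> demand_grammar P \<sigma> \<longrightarrow> A \<in> N \<longrightarrow> R rhs"
      show "\<forall>(A, rhs) \<in> demand_grammar P \<sigma>. A \<in> N \<longrightarrow> R rhs"
      proof clarify
        fix a b assume ab: "(a, b) \<in> demand_grammar P \<sigma>" "a \<in> N"
        show "R b"
        proof (cases "a = Crit")
          case True then obtain w where "b = map Inl w" using ab G_crit by blast
          then show ?thesis using R by simp
        next
          case False then show ?thesis using H ab by blast
        qed
      qed
    qed blast
    moreover have "\<And>A rhs. A \<noteq> Crit \<Longrightarrow> (A, rhs) \<in> demand_grammar P \<sigma>1 \<longleftrightarrow> (A, rhs) \<in> demand_grammar P \<sigma>2"
      by (rule G_same)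
    ultimately show ?thesis by presburger
  qed
  show ?thesis unfolding needs_mn_def
    using *[of "right_linear_wrt N", OF rl_map_Inl(1)] *[of "left_linear_wrt N", OF rl_map_Inl(2)] by simp
qed

lemma edge_ln: "(B, C) \<in> nt_edge (demand_grammar P \<sigma>) \<Longrightarrow> \<not> isDnt B \<Longrightarrow> \<not> isDnt C"
proof -
  assume e: "(B, C) \<in> nt_edge (demand_grammar P \<sigma>)" and B: "\<not> isDnt B"
  then obtain rhs where r: "(B, rhs) \<in> demand_grammar P \<sigma>" "Inr C \<in> set rhs" unfolding nt_edge_def by auto
  have "B \<noteq> Crit" using B by auto
  then have "lnform rhs" using G_shape[OF r(1)] B unfolding gshape_def by auto
  then show ?thesis using r(2) unfolding lnform_def by auto
qed

lemma reach_ln: "(B, A) \<in> (nt_edge (demand_grammar P \<sigma>))\<^sup>* \<Longrightarrow> \<not> isDnt B \<Longrightarrow> \<not> isDnt A"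
  by (induction rule: rtrancl_induct) (auto dest: edge_ln)

lemma not_needs: "isDnt A \<Longrightarrow> \<not> needs_mn (demand_grammar P \<sigma>) (scc (demand_grammar P \<sigma>) A)"
proof -
  assume A: "isDnt A"
  let ?G = "demand_grammar P \<sigma>" let ?N = "scc ?G A"
  have N: "isDnt B" if "B \<in> ?N" for B
    using that reach_ln[of B A P \<sigma>] A unfolding scc_def by auto
  have "right_linear_wrt ?N rhs" if r: "(B, rhs) \<in> ?G" "B \<in> ?N" for B rhs
  proof -
    have "gshape B rhs" using r G_shape by blast
    then consider (c) w where "rhs = map Inl w" | (d) \<beta> X where "rhs = \<beta> @ [Inr X]" "lnform \<beta>"
      using N[OF r(2)] by (auto simp: gshape_def split: if_splits)
    then show ?thesis
    proof cases
      case c then show ?thesis by (simp add: rl_map_Inl)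
    next
      case d
      show ?thesis unfolding right_linear_wrt_def
      proof (intro allI impI)
        fix i assume i: "i < length rhs" and "\<exists>C\<in>?N. rhs ! i = Inr C"
        then obtain C where C: "C \<in> ?N" "rhs ! i = Inr C" by auto
        show "i = length rhs - 1"
        proof (rule ccontr)
          assume "i \<noteq> length rhs - 1"
          then have "i < length \<beta>" using i d by auto
          then have "rhs ! i = \<beta> ! i" "\<beta> ! i \<in> set \<beta>" using d by (auto simp: nth_append)
          then have "\<not> isDnt C" using d C by (auto simp: lnform_def)
          then show False using N C by auto
        qed
      qed
    qed
  qed
  then have "\<forall>(B, rhs) \<in> ?G. B \<in> ?N \<longrightarrow> right_linear_wrt ?N rhs" by fast
  then show ?thesis unfolding needs_mn_def by simp
qed


lemma mn_chain_props:
  "(X, r) \<in> set (mn_chain inN cur A rhs acc) \<Longrightarrow>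
   (X = cur \<or> (\<exists>B. X = Prime B)) \<and>
   (\<forall>x\<in>set r. x \<in> set acc \<or> (\<exists>t. x = Inl t) \<or> (\<exists>B. x = Inr (Orig B) \<and> Inr B \<in> set rhs) \<or> (\<exists>B. x = Inr (Prime B)))"
proof (induction inN cur A rhs acc rule: mn_chain.induct)
  case (1 inN cur A acc) then show ?case by auto
next
  case (2 inN cur A t r acc) then show ?case by fastforce
next
  case (3 inN cur A B r acc) then show ?case by (fastforce split: if_splits)
qed

lemma M_cases: "(X, r) \<in> mohri_nederhof G \<Longrightarrow>
  (\<exists>A rhs. (A, rhs) \<in> G \<and> needs_mn G (scc G A) \<and> (X, r) \<in> set (mn_chain (\<lambda>B. B \<in> scc G A) (Orig A) A rhs [])) \<or>
  (\<exists>A rhs. (A, rhs) \<in> G \<and> \<not> needs_mn G (scc G A) \<and> X = Orig A \<and> r = map (map_sum id Orig) rhs) \<or>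
  (\<exists>A. needs_mn G (scc G A) \<and> X = Prime A \<and> r = [])"
  unfolding mohri_nederhof_def by (simp, blast)

lemma M_Orig_D:
  assumes "(Orig A, r) \<in> mohri_nederhof (demand_grammar P \<sigma>)" "isDnt A"
  shows "\<exists>rhs. (A, rhs) \<in> demand_grammar P \<sigma> \<and> r = map (map_sum id Orig) rhs"
  using M_cases[OF assms(1)]
proof (elim disjE exE conjE)
  fix A' rhs assume h: "(A', rhs) \<in> demand_grammar P \<sigma>" "needs_mn (demand_grammar P \<sigma>) (scc (demand_grammar P \<sigma>) A')"
    "(Orig A, r) \<in> set (mn_chain (\<lambda>B. B \<in> scc (demand_grammar P \<sigma>) A') (Orig A') A' rhs [])"
  then have "A = A'" using mn_chain_props[OF h(3)] by auto
  then show ?thesis using h(2) not_needs[OF assms(2)] by simp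
qed auto

lemma M_nonD:
  assumes "(X, r) \<in> mohri_nederhof (demand_grammar P \<sigma>)" "\<not> isD X"
  shows "noD r"
  using M_cases[OF assms(1)]
proof (elim disjE exE conjE)
  fix A' rhs assume h: "(A', rhs) \<in> demand_grammar P \<sigma>" "needs_mn (demand_grammar P \<sigma>) (scc (demand_grammar P \<sigma>) A')"
    "(X, r) \<in> set (mn_chain (\<lambda>B. B \<in> scc (demand_grammar P \<sigma>) A') (Orig A') A' rhs [])"
  then have "\<not> isDnt A'" using not_needs by blast
  then have "A' \<noteq> Crit" by auto
  with \<open>\<not> isDnt A'\<close> have "lnform rhs" using G_shape[OF h(1)] unfolding gshape_def by auto
  then show ?thesis using mn_chain_props[OF h(3)] unfolding noD_def lnform_def by fastforce
next
  fix A' rhs assume h: "(A', rhs) \<in> demand_grammar P \<sigma>" "X = Orig A'" "r = map (map_sum id Orig) rhs"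
  then have "\<not> isDnt A'" using assms(2) by simp
  then have "A' \<noteq> Crit" by auto
  with \<open>\<not> isDnt A'\<close> have "lnform rhs" using G_shape[OF h(1)] unfolding gshape_def by auto
  then show ?thesis using h(3) unfolding noD_def lnform_def by (auto simp: map_sum_def split: sum.splits)
next
  fix A' assume "r = []" then show ?thesis by (simp add: noD_def)
qed

lemma M_crit: "(Orig Crit, r) \<in> mohri_nederhof (demand_grammar P \<sigma>) \<longleftrightarrow> (\<exists>w\<in>\<sigma>. r = map Inl w)"
proof
  assume "(Orig Crit, r) \<in> mohri_nederhof (demand_grammar P \<sigma>)"
  then obtain rhs where "(Crit, rhs) \<in> demand_grammar P \<sigma>" "r = map (map_sum id Orig) rhs"
    using M_Orig_D by fastforce
  then show "\<exists>w\<in>\<sigma>. r = map Inl w" using G_crit by (auto simp: comp_def)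
next
  assume "\<exists>w\<in>\<sigma>. r = map Inl w"
  then obtain w where w: "w \<in> \<sigma>" "r = map Inl w" by blast
  then have "(Crit, map Inl w) \<in> demand_grammar P \<sigma>" using G_crit by blast
  moreover have "\<not> needs_mn (demand_grammar P \<sigma>) (scc (demand_grammar P \<sigma>) Crit)" using not_needs by simp
  ultimately show "(Orig Crit, r) \<in> mohri_nederhof (demand_grammar P \<sigma>)"
    unfolding mohri_nederhof_def using w by force
qed

lemma M_same:
  assumes "(X, r) \<in> mohri_nederhof (demand_grammar P \<sigma>1)" "X \<noteq> Orig Crit"
  shows "(X, r) \<in> mohri_nederhof (demand_grammar P \<sigma>2)"
  using M_cases[OF assms(1)]
proof (elim disjE exE conjE)
  fix A' rhs assume h: "(A', rhs) \<in> demand_grammar P \<sigma>1" "needs_mn (demand_grammar P \<sigma>1) (scc (demand_grammar P \<sigma>1) A')"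
    "(X, r) \<in> set (mn_chain (\<lambda>B. B \<in> scc (demand_grammar P \<sigma>1) A') (Orig A') A' rhs [])"
  then have "A' \<noteq> Crit" using not_needs[of Crit P \<sigma>1] by auto
  then have "(A', rhs) \<in> demand_grammar P \<sigma>2" using h(1) G_same by metis
  moreover have "needs_mn (demand_grammar P \<sigma>2) (scc (demand_grammar P \<sigma>2) A')"
    using h(2) needs_same scc_same by metis
  moreover have "(X, r) \<in> set (mn_chain (\<lambda>B. B \<in> scc (demand_grammar P \<sigma>2) A') (Orig A') A' rhs [])"
    using h(3) scc_same by metis
  ultimately show ?thesis unfolding mohri_nederhof_def by blast
next
  fix A' rhs assume h: "(A', rhs) \<in> demand_grammar P \<sigma>1" "\<not> needs_mn (demand_grammar P \<sigma>1) (scc (demand_grammar P \<sigma>1) A')"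
    "X = Orig A'" "r = map (map_sum id Orig) rhs"
  then have "A' \<noteq> Crit" using assms(2) by auto
  then have "(A', rhs) \<in> demand_grammar P \<sigma>2" using h(1) G_same by metis
  moreover have "\<not> needs_mn (demand_grammar P \<sigma>2) (scc (demand_grammar P \<sigma>2) A')"
    using h(2) needs_same scc_same by metis
  ultimately show ?thesis unfolding mohri_nederhof_def using h(3,4) by blast
next
  fix A' assume h: "needs_mn (demand_grammar P \<sigma>1) (scc (demand_grammar P \<sigma>1) A')" "X = Prime A'" "r = []"
  then have "needs_mn (demand_grammar P \<sigma>2) (scc (demand_grammar P \<sigma>2) A')"
    using needs_same scc_same by metis
  then show ?thesis unfolding mohri_nederhof_def using h(2,3) by blast
qed

lemma M_D:
  assumes "(X, r) \<in> mohri_nederhof (demand_grammar P \<sigma>)" "isD X" "X \<noteq> Orig Crit"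
  shows "\<exists>\<gamma> Y. r = \<gamma> @ [Inr Y] \<and> isD Y \<and> noD \<gamma>"
proof -
  obtain A where A: "X = Orig A" "isDnt A" using assms(2) by (cases X) auto
  then obtain rhs where r: "(A, rhs) \<in> demand_grammar P \<sigma>" "r = map (map_sum id Orig) rhs"
    using M_Orig_D assms(1) by blast
  have "A \<noteq> Crit" using A assms(3) by auto
  then obtain \<beta> Z where "rhs = \<beta> @ [Inr Z]" "isDnt Z" "lnform \<beta>"
    using G_shape[OF r(1)] A(2) unfolding gshape_def by auto
  then show ?thesis using r(2)
    by (intro exI[of _ "map (map_sum id Orig) \<beta>"] exI[of _ "Orig Z"])
       (auto simp: noD_def lnform_def map_sum_def split: sum.splits)
qed


lemma noD_simps[simp]: "noD [] = True" "noD (\<alpha> @ \<beta>) = (noD \<alpha> \<and> noD \<beta>)" "noD (x # \<alpha>) = ((\<forall>Y. x = Inr Y \<longrightarrow> \<not> isD Y) \<and> noD \<alpha>)"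
  "noD (map Inl s) = True"
  by (auto simp: noD_def)

lemma step_intro: "(A, rhs) \<in> G \<Longrightarrow> (u @ [Inr A] @ v, u @ rhs @ v) \<in> step G"
  unfolding step_def by blast

lemma split_Inl: "u @ [Inr A] @ v = \<gamma> @ map Inl s \<Longrightarrow> \<exists>v'. \<gamma> = u @ [Inr A] @ v' \<and> v = v' @ map Inl s"
proof -
  assume h: "u @ [Inr A] @ v = \<gamma> @ map Inl s"
  then have "u @ (Inr A # v) = \<gamma> @ map Inl s" by simp
  then obtain us where "(u = \<gamma> @ us \<and> us @ (Inr A # v) = map Inl s) \<or> (u @ us = \<gamma> \<and> Inr A # v = us @ map Inl s)"
    unfolding append_eq_append_conv2 by blast
  then show ?thesis
  proof
    assume "u = \<gamma> @ us \<and> us @ (Inr A # v) = map Inl s"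
    then have "Inr A \<in> set (map Inl s)" by (metis in_set_conv_decomp)
    then show ?thesis by auto
  next
    assume a: "u @ us = \<gamma> \<and> Inr A # v = us @ map Inl s"
    show ?thesis
    proof (cases us)
      case Nil then show ?thesis using a by (cases s) auto
    next
      case (Cons b us') then show ?thesis using a by auto
    qed
  qed
qed

lemma split_last: "u @ [a] @ v = \<gamma> @ [b] \<Longrightarrow> (v = [] \<and> u = \<gamma> \<and> a = b) \<or> (\<exists>v'. v = v' @ [b] \<and> \<gamma> = u @ [a] @ v')"
  by (cases v rule: rev_cases) auto

abbreviation Mg :: "prog \<Rightarrow> sym list set \<Rightarrow> (sym, nt mnnt) grammar" where
  "Mg P \<sigma> \<equiv> mohri_nederhof (demand_grammar P \<sigma>)"

lemma deriv_inv:
  assumes "([Inr (Orig (Dn p))], \<phi>) \<in> (step (Mg P \<sigma>1))\<^sup>*"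
  shows "(\<exists>\<gamma> Y. \<phi> = \<gamma> @ [Inr Y] \<and> isD Y \<and> noD \<gamma> \<and> ([Inr (Orig (Dn p))], \<phi>) \<in> (step (Mg P \<sigma>2))\<^sup>*) \<or>
         (\<exists>\<gamma> s. \<phi> = \<gamma> @ map Inl s \<and> s \<in> \<sigma>1 \<and> noD \<gamma> \<and> ([Inr (Orig (Dn p))], \<gamma> @ [Inr (Orig Crit)]) \<in> (step (Mg P \<sigma>2))\<^sup>*)"
  using assms
proof (induction rule: rtrancl_induct)
  case base
  show ?case by (rule disjI1, rule exI[of _ "[]"], rule exI[of _ "Orig (Dn p)"]) simp
next
  case (step \<phi> \<phi>')
  from step.hyps(2) obtain u A v rhs where st: "\<phi> = u @ [Inr A] @ v" "\<phi>' = u @ rhs @ v" "(A, rhs) \<in> Mg P \<sigma>1"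
    unfolding step_def by blast
  from step.IH show ?case
  proof (elim disjE exE conjE)
    fix \<gamma> Y assume h: "\<phi> = \<gamma> @ [Inr Y]" "isD Y" "noD \<gamma>" "([Inr (Orig (Dn p))], \<phi>) \<in> (step (Mg P \<sigma>2))\<^sup>*"
    from split_last[of u "Inr A" v \<gamma> "Inr Y"] st(1) h(1)
    have "(v = [] \<and> u = \<gamma> \<and> A = Y) \<or> (\<exists>v'. v = v' @ [Inr Y] \<and> \<gamma> = u @ [Inr A] @ v')" by simp
    then show ?case
    proof (elim disjE exE conjE)
      assume v: "v = []" "u = \<gamma>" "A = Y"
      show ?case
      proof (cases "Y = Orig Crit")
        case True
        then obtain s where s: "s \<in> \<sigma>1" "rhs = map Inl s" using st(3) v M_crit by blast
        show ?thesis using s h v st True by auto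
      next
        case False
        obtain \<gamma>' Y' where r: "rhs = \<gamma>' @ [Inr Y']" "isD Y'" "noD \<gamma>'"
          using M_D[OF st(3)[unfolded v(3)] h(2) False] by blast
        have "(Y, rhs) \<in> Mg P \<sigma>2" using M_same st(3) v(3) False by blast
        then have "(\<phi>, \<phi>') \<in> step (Mg P \<sigma>2)" using step_intro[of Y rhs _ u v] st v by simp
        then have "([Inr (Orig (Dn p))], \<phi>') \<in> (step (Mg P \<sigma>2))\<^sup>*" using h(4) by simp
        then show ?thesis using st(2) v r h(3)
          by (intro disjI1 exI[of _ "\<gamma> @ \<gamma>'"] exI[of _ Y']) auto
      qed
    next
      fix v' assume v: "v = v' @ [Inr Y]" "\<gamma> = u @ [Inr A] @ v'"
      have nA: "\<not> isD A" using h(3) v(2) by simp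
      then have "A \<noteq> Orig Crit" by auto
      then have "(A, rhs) \<in> Mg P \<sigma>2" using M_same st(3) by blast
      then have "(\<phi>, \<phi>') \<in> step (Mg P \<sigma>2)" using step_intro[of A rhs _ u v] st by simp
      then have "([Inr (Orig (Dn p))], \<phi>') \<in> (step (Mg P \<sigma>2))\<^sup>*" using h(4) by simp
      moreover have "noD rhs" using M_nonD[OF st(3) nA] .
      ultimately show ?thesis using st(2) v h
        by (intro disjI1 exI[of _ "u @ rhs @ v'"] exI[of _ Y]) auto
    qed
  next
    fix \<gamma> s assume h: "\<phi> = \<gamma> @ map Inl s" "s \<in> \<sigma>1" "noD \<gamma>"
      "([Inr (Orig (Dn p))], \<gamma> @ [Inr (Orig Crit)]) \<in> (step (Mg P \<sigma>2))\<^sup>*"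
    obtain v' where v: "\<gamma> = u @ [Inr A] @ v'" "v = v' @ map Inl s"
      using split_Inl[of u A v \<gamma> s] st(1) h(1) by auto
    have nA: "\<not> isD A" using h(3) v(1) by simp
    then have "A \<noteq> Orig Crit" by auto
    then have "(A, rhs) \<in> Mg P \<sigma>2" using M_same st(3) by blast
    then have "(\<gamma> @ [Inr (Orig Crit)], (u @ rhs @ v') @ [Inr (Orig Crit)]) \<in> step (Mg P \<sigma>2)"
      using step_intro[of A rhs _ u "v' @ [Inr (Orig Crit)]"] v by simp
    then have "([Inr (Orig (Dn p))], (u @ rhs @ v') @ [Inr (Orig Crit)]) \<in> (step (Mg P \<sigma>2))\<^sup>*" using h(4) by simp
    moreover have "noD rhs" using M_nonD[OF st(3) nA] .
    ultimately show ?thesis using st(2) v h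
      by (intro disjI2 exI[of _ "u @ rhs @ v'"] exI[of _ s]) auto
  qed
qed

lemma nI: "map Inl w \<noteq> \<gamma> @ [Inr Y]"
proof
  assume "map Inl w = \<gamma> @ [Inr Y]"
  then have "Inr Y \<in> set (map Inl w)" by (metis in_set_conv_decomp)
  then show False by auto
qed

lemma LM_split: "LM P \<sigma> p = {y @ s | y s. y \<in> LM P {[]} p \<and> s \<in> \<sigma>}"
proof (intro set_eqI iffI)
  fix w assume "w \<in> LM P \<sigma> p"
  then have d: "([Inr (Orig (Dn p))], map Inl w) \<in> (step (Mg P \<sigma>))\<^sup>*"
    unfolding LM_def lang_def by simp
  have "\<exists>\<gamma> s. map Inl w = \<gamma> @ map Inl s \<and> s \<in> \<sigma> \<and> ([Inr (Orig (Dn p))], \<gamma> @ [Inr (Orig Crit)]) \<in> (step (Mg P {[]}))\<^sup>*"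
    using deriv_inv[OF d, of "{[]}"]
  proof (elim disjE exE conjE)
    fix \<gamma>0 Y0 assume "map Inl w = \<gamma>0 @ [Inr Y0]"
    then show ?thesis using nI[of w \<gamma>0 Y0] by simp
  qed blast
  then obtain \<gamma> s where g: "map Inl w = \<gamma> @ map Inl s" "s \<in> \<sigma>" "([Inr (Orig (Dn p))], \<gamma> @ [Inr (Orig Crit)]) \<in> (step (Mg P {[]}))\<^sup>*" by blast
  from g(1) obtain y where y: "\<gamma> = map Inl y" "w = y @ s"
    by (metis append_eq_map_conv map_inj_on sum.inject(1) inj_on_def)
  have "(Orig Crit, []) \<in> Mg P {[]}" using M_crit[of "[]" P "{[]}"] by simp
  then have "(\<gamma> @ [Inr (Orig Crit)], \<gamma>) \<in> step (Mg P {[]})" using step_intro[of _ "[]" _ \<gamma> "[]"] by simp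
  then have "([Inr (Orig (Dn p))], map Inl y) \<in> (step (Mg P {[]}))\<^sup>*" using g(3) y(1) by simp
  then have "y \<in> LM P {[]} p" unfolding LM_def lang_def by simp
  then show "w \<in> {y @ s | y s. y \<in> LM P {[]} p \<and> s \<in> \<sigma>}" using y g(2) by blast
next
  fix w assume "w \<in> {y @ s | y s. y \<in> LM P {[]} p \<and> s \<in> \<sigma>}"
  then obtain y s where ys: "w = y @ s" "y \<in> LM P {[]} p" "s \<in> \<sigma>" by blast
  then have d: "([Inr (Orig (Dn p))], map Inl y) \<in> (step (Mg P {[]}))\<^sup>*"
    unfolding LM_def lang_def by simp
  have "\<exists>\<gamma> s'. map Inl y = \<gamma> @ map Inl s' \<and> s' \<in> {[]} \<and> ([Inr (Orig (Dn p))], \<gamma> @ [Inr (Orig Crit)]) \<in> (step (Mg P \<sigma>))\<^sup>*"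
    using deriv_inv[OF d, of \<sigma>]
  proof (elim disjE exE conjE)
    fix \<gamma>0 Y0 assume "map Inl y = \<gamma>0 @ [Inr Y0]"
    then show ?thesis using nI[of y \<gamma>0 Y0] by simp
  qed blast
  then obtain \<gamma> s' where g: "map Inl y = \<gamma> @ map Inl s'" "s' \<in> {[]}" "([Inr (Orig (Dn p))], \<gamma> @ [Inr (Orig Crit)]) \<in> (step (Mg P \<sigma>))\<^sup>*" by blast
  then have g1: "\<gamma> = map Inl y" by simp
  have "(Orig Crit, map Inl s) \<in> Mg P \<sigma>" using M_crit ys(3) by blast
  then have "(\<gamma> @ [Inr (Orig Crit)], \<gamma> @ map Inl s) \<in> step (Mg P \<sigma>)" using step_intro[of _ "map Inl s" _ \<gamma> "[]"] by simp
  then have "([Inr (Orig (Dn p))], map Inl (y @ s)) \<in> (step (Mg P \<sigma>))\<^sup>*" using g(3) g1 by simp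
  then show "w \<in> LM P \<sigma> p" unfolding LM_def lang_def using ys(1) by simp
qed


theorem mainTheorem4:
  fixes P :: prog and p :: lab and \<sigma> :: "sym list set"
  assumes "wf_prog P"
    and "p \<in> prog_expr_labs P"
    and "slicing_criterion \<sigma>"
  shows "simpS (LM P \<sigma> p) \<noteq> {} \<longleftrightarrow> inSlice P p \<sigma>"
proof -
  have crit: "\<And>w. w \<in> \<sigma> \<Longrightarrow> set w \<subseteq> {S0, S1}" and pc: "\<And>w v. w @ v \<in> \<sigma> \<Longrightarrow> w \<in> \<sigma>"
    using assms(3) unfolding slicing_criterion_def by auto
  let ?L = "LM P {[]} p"
  show ?thesis
  proof
    assume "simpS (LM P \<sigma> p) \<noteq> {}"
    then obtain z where z: "z \<in> LM P \<sigma> p" "simp1 z \<noteq> {}" unfolding simpS_def by blast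
    then obtain y s where ys: "z = y @ s" "y \<in> ?L" "s \<in> \<sigma>" using LM_split[of P \<sigma> p] by blast
    then obtain c where c: "c \<in> canon1 y" "simp1 (c @ s) \<noteq> {}" using z(2) simp1_canon[of y s] by auto
    then obtain u q where uq: "c = u @ q" "set u \<subseteq> {S0,S1,S2}" "set q \<subseteq> {S0b,S1b}" using canon1_shape by blast
    have "simp1 (u @ (q @ s)) \<noteq> {}" using c(2) uq(1) by simp
    then have "simp1 (q @ s) \<noteq> {}" using simp1_u[OF uq(2)] by blast
    then obtain s' where "s = ovl q @ s'" using simp1_bars[OF uq(3) crit[OF ys(3)]] by blast
    then have "ovl q \<in> \<sigma>" using pc ys(3) by blast
    moreover have "u @ q \<in> LA P p" unfolding LA_def canonS_def using ys(2) c(1) uq(1) by blast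
    ultimately have "ovl q \<in> Lcomp P p \<inter> \<sigma>" unfolding Lcomp_def using uq by blast
    then show "inSlice P p \<sigma>" unfolding inSlice_def by blast
  next
    assume "inSlice P p \<sigma>"
    then obtain q u where uq: "set q \<subseteq> {S0b,S1b}" "set u \<subseteq> {S0,S1,S2}" "u @ q \<in> LA P p" "ovl q \<in> \<sigma>"
      unfolding inSlice_def Lcomp_def by blast
    then obtain y where y: "y \<in> ?L" "u @ q \<in> canon1 y" unfolding LA_def canonS_def by blast
    have "y @ ovl q \<in> LM P \<sigma> p" using LM_split[of P \<sigma> p] y(1) uq(4) by blast
    moreover have "simp1 (q @ ovl q) \<noteq> {}" using simp1_bars[OF uq(1) ovl_01[OF uq(1)]] by auto
    then have "simp1 (u @ (q @ ovl q)) \<noteq> {}" using simp1_u[OF uq(2)] by blast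
    then have "simp1 ((u @ q) @ ovl q) \<noteq> {}" by simp
    then have "simp1 (y @ ovl q) \<noteq> {}" using simp1_canon[of y "ovl q"] y(2) by blast
    ultimately show "simpS (LM P \<sigma> p) \<noteq> {}" unfolding simpS_def by blast
  qed
qed

end
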